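(* Let $r,q$ be positive integers with $q\ge r+1$, and let $G$ be a $2q$-path degenerate graph. Define $f(0)=1$ and, for integers $x\ge1$, \[ f(x)=\begin{cases} x+2+\log_2\!\left(\frac{q-1}{q-x}\right), & \text{if } q<2r,\\ x+2, & \text{otherwise.}\end{cases} \] Then $G$ has a good linear order with respect to $f$ up to $r$.
   Context: Graphs are finite and simple. A strict ear of a graph $G$ is a path of $G$ whose internal vertices all have degree $2$ in $G$ and whose two endpoints are distinct. For an integer $p\ge1$, a $p$-reduction of $G$ is the deletion of either an isolated vertex, or a vertex of degree $1$, or the internal vertices of a strict ear of $G$ of length at least $p$. A graph is $p$-path degenerate if it can be reduced to the empty graph by a sequence of $p$-reductions. For a linear order $\pi$ of $V(G)$, an integer $x\ge0$ and $u,v\in V(G)$, $u$ is weakly $x$-reachable from $v$ under $\pi$ if $u\le_\pi v$ and there is a $u$–$v$ path $P$ of length at most $x$ such that $u<_\pi w$ for every internal vertex $w$ of $P$. $\mathrm{WReach}_x[G,\pi,v]$ is the set of vertices weakly $x$-reachable from $v$. A linear order $\pi$ of $V(G)$ is a good linear order with respect to $f$ up to $r$ if $\max_{v\in V(G)}|\mathrm{WReach}_x[G,\pi,v]|\le f(x)$ for every integer $0\le x\le r$. *)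

theory Defs
  imports Complex_Main
begin

definition graph :: "'a set \<Rightarrow> 'a set set \<Rightarrow> bool" where
  "graph V E \<longleftrightarrow> finite V \<and> (\<forall>e\<in>E. \<exists>u v. e = {u, v} \<and> u \<noteq> v \<and> u \<in> V \<and> v \<in> V)"

definition degree :: "'a set set \<Rightarrow> 'a \<Rightarrow> nat" where
  "degree E v = card {u. {u, v} \<in> E}"

definition is_path :: "'a set \<Rightarrow> 'a set set \<Rightarrow> 'a list \<Rightarrow> bool" where
  "is_path V E ps \<longleftrightarrow> ps \<noteq> [] \<and> distinct ps \<and> set ps \<subseteq> V \<and>
     (\<forall>i. Suc i < length ps \<longrightarrow> {ps ! i, ps ! Suc i} \<in> E)"

definition path_len :: "'a list \<Rightarrow> nat" where
  "path_len ps = length ps - 1"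

definition internal :: "'a list \<Rightarrow> 'a set" where
  "internal ps = {ps ! i | i. 0 < i \<and> Suc i < length ps}"

definition strict_ear :: "'a set \<Rightarrow> 'a set set \<Rightarrow> 'a list \<Rightarrow> bool" where
  "strict_ear V E ps \<longleftrightarrow> is_path V E ps \<and> hd ps \<noteq> last ps \<and>
     (\<forall>w\<in>internal ps. degree E w = 2)"

definition delete_vertices :: "'a set \<Rightarrow> 'a set \<Rightarrow> 'a set set \<Rightarrow> 'a set \<times> 'a set set" where
  "delete_vertices S V E = (V - S, {e\<in>E. e \<inter> S = {}})"

definition p_reduction :: "nat \<Rightarrow> 'a set \<Rightarrow> 'a set set \<Rightarrow> 'a set \<Rightarrow> 'a set set \<Rightarrow> bool" where
  "p_reduction p V E V' E' \<longleftrightarrow>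
     (\<exists>v\<in>V. degree E v = 0 \<and> (V', E') = delete_vertices {v} V E) \<or>
     (\<exists>v\<in>V. degree E v = 1 \<and> (V', E') = delete_vertices {v} V E) \<or>
     (\<exists>ps. strict_ear V E ps \<and> path_len ps \<ge> p \<and> (V', E') = delete_vertices (internal ps) V E)"

inductive path_degenerate :: "nat \<Rightarrow> 'a set \<Rightarrow> 'a set set \<Rightarrow> bool" for p where
  empty: "path_degenerate p {} {}"
| step: "p_reduction p V E V' E' \<Longrightarrow> path_degenerate p V' E' \<Longrightarrow> path_degenerate p V E"

text \<open>Weak reachability w.r.t. a linear order L on V (pairs (a,b) meaning a \<le> b).\<close>
definition WReach :: "'a set \<Rightarrow> 'a set set \<Rightarrow> ('a \<times> 'a) set \<Rightarrow> nat \<Rightarrow> 'a \<Rightarrow> 'a set" where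
  "WReach V E L x v = {u \<in> V. (u, v) \<in> L \<and>
     (\<exists>ps. is_path V E ps \<and> hd ps = u \<and> last ps = v \<and> path_len ps \<le> x \<and>
        (\<forall>w\<in>internal ps. (u, w) \<in> L \<and> u \<noteq> w))}"

definition good_linear_order :: "'a set \<Rightarrow> 'a set set \<Rightarrow> ('a \<times> 'a) set \<Rightarrow> (nat \<Rightarrow> real) \<Rightarrow> nat \<Rightarrow> bool" where
  "good_linear_order V E L f r \<longleftrightarrow> linear_order_on V L \<and>
     (\<forall>x\<le>r. \<forall>v\<in>V. real (card (WReach V E L x v)) \<le> f x)"

end

theory Submission
  imports Defs
begin

lemma is_path_drop: "is_path V E ps \<Longrightarrow> k < length ps \<Longrightarrow> is_path V E (drop k ps)"
  unfolding is_path_def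
  by (auto dest: in_set_dropD)

lemma is_path_take: "is_path V E ps \<Longrightarrow> 0 < k \<Longrightarrow> is_path V E (take k ps)"
  unfolding is_path_def
  by (auto dest: in_set_takeD)

lemma hd_nth0: "0 < length xs \<Longrightarrow> xs!0 = hd xs"
  by (cases xs) auto

lemma last_nth: "0 < length xs \<Longrightarrow> last xs = xs!(length xs - 1)"
  by (cases xs rule: rev_cases) (auto simp: nth_append)

lemma is_path_rev: "is_path V E ps \<Longrightarrow> is_path V E (rev ps)"
  unfolding is_path_def
proof (intro conjI allI impI)
  fix i assume a: "ps \<noteq> [] \<and> distinct ps \<and> set ps \<subseteq> V \<and> (\<forall>i. Suc i < length ps \<longrightarrow> {ps ! i, ps ! Suc i} \<in> E)"
    and i: "Suc i < length (rev ps)"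
  have "{ps ! (length ps - Suc (Suc i)), ps ! Suc (length ps - Suc (Suc i))} \<in> E"
    using a i by auto
  moreover have "Suc (length ps - Suc (Suc i)) = length ps - Suc i" using i by simp
  ultimately show "{rev ps ! i, rev ps ! Suc i} \<in> E" using i
    by (simp add: rev_nth insert_commute)
qed auto

lemma internal_rev: "internal (rev ps) = internal ps"
  unfolding internal_def
proof safe
  fix i assume "0 < i" "Suc i < length (rev ps)"
  then show "\<exists>j. rev ps ! i = ps ! j \<and> 0 < j \<and> Suc j < length ps"
    by (intro exI[of _ "length ps - Suc i"]) (auto simp: rev_nth)
next
  fix i assume "0 < i" "Suc i < length ps"
  then show "\<exists>j. ps ! i = rev ps ! j \<and> 0 < j \<and> Suc j < length (rev ps)"
    by (intro exI[of _ "length ps - Suc i"]) (auto simp: rev_nth)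
qed

lemma internal_drop: "internal (drop k ps) \<subseteq> internal ps"
  unfolding internal_def
proof safe
  fix i assume "0 < i" "Suc i < length (drop k ps)"
  then show "\<exists>j. drop k ps ! i = ps ! j \<and> 0 < j \<and> Suc j < length ps"
    by (intro exI[of _ "k + i"]) auto
qed

lemma internal_nth: "0 < i \<Longrightarrow> Suc i < length ps \<Longrightarrow> ps ! i \<in> internal ps"
  unfolding internal_def by auto

lemma internal_set: "internal ps \<subseteq> set ps"
  unfolding internal_def by auto

lemma path_edge: "is_path V E ps \<Longrightarrow> Suc i < length ps \<Longrightarrow> {ps ! i, ps ! Suc i} \<in> E"
  unfolding is_path_def by auto

lemma path_distinct: "is_path V E ps \<Longrightarrow> distinct ps"
  unfolding is_path_def by auto

lemma path_ne: "is_path V E ps \<Longrightarrow> ps \<noteq> []"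
  unfolding is_path_def by auto

lemma path_set: "is_path V E ps \<Longrightarrow> set ps \<subseteq> V"
  unfolding is_path_def by auto

lemma is_path_single: "v \<in> V \<Longrightarrow> is_path V E [v]"
  unfolding is_path_def by auto

lemma path_restrict:
  assumes "is_path V E ps" "set ps \<subseteq> V'" "V' \<inter> S = {}"
  shows "is_path V' {e\<in>E. e \<inter> S = {}} ps"
  unfolding is_path_def
proof (intro conjI allI impI)
  fix i assume i: "Suc i < length ps"
  have "ps ! i \<in> V'" "ps ! Suc i \<in> V'" using i assms(2) by auto
  then show "{ps ! i, ps ! Suc i} \<in> {e \<in> E. e \<inter> S = {}}"
    using path_edge[OF assms(1) i] assms(3) by auto
qed (use assms in \<open>auto simp: is_path_def\<close>)

definition ear_ctx :: "'a set \<Rightarrow> 'a set set \<Rightarrow> 'a set \<Rightarrow> 'a list \<Rightarrow> nat \<Rightarrow> bool" where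
"ear_ctx V E V' W m \<longleftrightarrow> length W = Suc m \<and> distinct W \<and> set W \<subseteq> V \<and> 2 \<le> m \<and>
   V' = V - {W!j | j. 0<j \<and> j<m} \<and>
   (\<forall>j y. 0<j \<longrightarrow> j<m \<longrightarrow> ({y, W!j} \<in> E \<longleftrightarrow> y = W!(j-1) \<or> y = W!(Suc j)))"

lemma ear_len: "ear_ctx V E V' W m \<Longrightarrow> length W = Suc m"
  unfolding ear_ctx_def by auto

lemma ear_nbr: "ear_ctx V E V' W m \<Longrightarrow> 0<j \<Longrightarrow> j<m \<Longrightarrow> {y, W!j} \<in> E \<Longrightarrow> y = W!(j-1) \<or> y = W!(Suc j)"
  unfolding ear_ctx_def by blast

lemma ear_inj: "ear_ctx V E V' W m \<Longrightarrow> i \<le> m \<Longrightarrow> j \<le> m \<Longrightarrow> W!i = W!j \<longleftrightarrow> i = j"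
  unfolding ear_ctx_def by (auto simp: nth_eq_iff_index_eq)

lemma ear_inner: "ear_ctx V E V' W m \<Longrightarrow> 0<j \<Longrightarrow> j<m \<Longrightarrow> W!j \<notin> V'"
  unfolding ear_ctx_def by auto

lemma ear_inV: "ear_ctx V E V' W m \<Longrightarrow> j \<le> m \<Longrightarrow> W!j \<in> V"
  unfolding ear_ctx_def by (auto simp: subset_iff)

lemma ear_V'sub: "ear_ctx V E V' W m \<Longrightarrow> V' \<subseteq> V"
  unfolding ear_ctx_def by auto

lemma ear_notV': "ear_ctx V E V' W m \<Longrightarrow> y \<in> V \<Longrightarrow> y \<notin> V' \<Longrightarrow> \<exists>j. 0<j \<and> j<m \<and> y = W!j"
  unfolding ear_ctx_def by auto

lemma ear_end0: "ear_ctx V E V' W m \<Longrightarrow> W!0 \<in> V'"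
proof -
  assume e: "ear_ctx V E V' W m"
  have "W!0 \<in> V" using ear_inV[OF e, of 0] by simp
  moreover have "W!0 \<noteq> W!j" if "0<j" "j<m" for j using ear_inj[OF e, of 0 j] that by simp
  ultimately show ?thesis using e unfolding ear_ctx_def by auto
qed

lemma ear_endm: "ear_ctx V E V' W m \<Longrightarrow> W!m \<in> V'"
proof -
  assume e: "ear_ctx V E V' W m"
  have "W!m \<in> V" using ear_inV[OF e, of m] by simp
  moreover have "W!m \<noteq> W!j" if "0<j" "j<m" for j using ear_inj[OF e, of m j] that by simp
  ultimately show ?thesis using e unfolding ear_ctx_def by auto
qed

lemma ear_rev: assumes e: "ear_ctx V E V' W m" shows "ear_ctx V E V' (rev W) m"
proof -
  have len: "length W = Suc m" using e by (simp add: ear_ctx_def)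
  have rn: "rev W ! j = W ! (m - j)" if "j \<le> m" for j using that len by (simp add: rev_nth)
  have I: "{rev W!j | j. 0<j \<and> j<m} = {W!j | j. 0<j \<and> j<m}"
  proof safe
    fix j assume "0<j" "j<m" then show "\<exists>i. rev W ! j = W ! i \<and> 0 < i \<and> i < m"
      by (intro exI[of _ "m-j"]) (auto simp: rn)
  next
    fix j assume "0<j" "j<m" then show "\<exists>i. W ! j = rev W ! i \<and> 0 < i \<and> i < m"
      by (intro exI[of _ "m-j"]) (auto simp: rn)
  qed
  have N: "({y, rev W!j} \<in> E \<longleftrightarrow> y = rev W!(j-1) \<or> y = rev W!(Suc j))" if "0<j" "j<m" for j y
  proof -
    have "{y, W!(m-j)} \<in> E \<longleftrightarrow> y = W!(m-j-1) \<or> y = W!(Suc (m-j))"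
      using e that unfolding ear_ctx_def by auto
    moreover have "m - j - 1 = m - Suc j" "Suc (m-j) = m - (j-1)" using that by auto
    ultimately show ?thesis using that by (simp add: rn disj_commute)
  qed
  have a1: "length (rev W) = Suc m" "distinct (rev W)" "set (rev W) \<subseteq> V" "2 \<le> m"
    "V' = V - {W!j | j. 0<j \<and> j<m}"
    using e unfolding ear_ctx_def by auto
  show ?thesis unfolding ear_ctx_def
    apply (intro conjI)
    using a1 apply blast
    using a1 apply blast
    using a1 apply blast
    using a1 apply blast
    subgoal using a1(5) I by simp
    using N by blast
qed

lemma dirL:
  assumes e: "ear_ctx V E V' W m" and p: "is_path V E qs" and h: "hd qs = W!j"
    and j: "0<j" "j<m" and l: "1 < length qs" and s: "qs!1 = W!(j-1)"
  shows "\<forall>t. Suc t < length qs \<longrightarrow> Suc t \<le> j \<longrightarrow> qs!t = W!(j-t) \<and> qs!(Suc t) = W!(j - Suc t)"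
proof (intro allI)
  fix t show "Suc t < length qs \<longrightarrow> Suc t \<le> j \<longrightarrow> qs!t = W!(j-t) \<and> qs!(Suc t) = W!(j - Suc t)"
  proof (induction t)
    case 0
    have "qs ! 0 = hd qs" by (rule hd_nth0) (use l in linarith)
    then show ?case using h s by simp
  next
    case (Suc t)
    show ?case
    proof (intro impI)
      assume a: "Suc (Suc t) < length qs" "Suc (Suc t) \<le> j"
      then have IH: "qs!t = W!(j-t)" "qs!(Suc t) = W!(j - Suc t)" using Suc.IH by auto
      have "{qs ! Suc t, qs ! Suc (Suc t)} \<in> E" using path_edge[OF p a(1)] .
      then have "{qs ! Suc (Suc t), W!(j - Suc t)} \<in> E" using IH by (simp add: insert_commute)
      then have "qs ! Suc (Suc t) = W!(j - Suc t - 1) \<or> qs ! Suc (Suc t) = W!(Suc (j - Suc t))"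
        using ear_nbr[OF e, of "j - Suc t"] a j by auto
      moreover have "qs ! Suc (Suc t) \<noteq> qs ! t"
        using path_distinct[OF p] a by (simp add: nth_eq_iff_index_eq)
      moreover have "Suc (j - Suc t) = j - t" using a by simp
      moreover have "j - Suc t - 1 = j - Suc (Suc t)" by simp
      ultimately have "qs ! Suc (Suc t) = W!(j - Suc (Suc t))" using IH by metis
      then show "qs ! Suc t = W ! (j - Suc t) \<and> qs ! Suc (Suc t) = W ! (j - Suc (Suc t))" using IH by simp
    qed
  qed
qed

lemma dirL':
  assumes e: "ear_ctx V E V' W m" and p: "is_path V E qs" and h: "hd qs = W!j"
    and j: "0<j" "j<m" and l: "1 < length qs" and s: "qs!1 = W!(j-1)"
    and t: "t < length qs" "t \<le> j"
  shows "qs!t = W!(j-t)"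
proof (cases t)
  case 0
  have "qs ! 0 = hd qs" by (rule hd_nth0) (use l in linarith)
  then show ?thesis using h 0 by simp
next
  case (Suc t') then show ?thesis using dirL[OF e p h j l s] t by auto
qed

lemma dirR':
  assumes e: "ear_ctx V E V' W m" and p: "is_path V E qs" and h: "hd qs = W!j"
    and j: "0<j" "j<m" and l: "1 < length qs" and s: "qs!1 = W!(Suc j)"
    and t: "t < length qs" "t \<le> m - j"
  shows "qs!t = W!(j+t)"
proof -
  have e': "ear_ctx V E V' (rev W) m" using ear_rev[OF e] .
  have len: "length W = Suc m" using ear_len[OF e] .
  have rn: "rev W ! k = W ! (m - k)" if "k \<le> m" for k using that len by (simp add: rev_nth)
  have "qs!t = rev W ! (m - j - t)"
    apply (rule dirL'[OF e' p _ _ _ l _ t(1)])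
    using h j s t by (auto simp: rn Suc_diff_Suc)
  then show ?thesis using t j by (simp add: rn)
qed

lemma ear_step:
  assumes e: "ear_ctx V E V' W m" and p: "is_path V E qs" and h: "hd qs = W!j"
    and j: "0<j" "j<m" and l: "1 < length qs"
  shows "qs!1 = W!(j-1) \<or> qs!1 = W!(Suc j)"
proof -
  have "{qs!0, qs!Suc 0} \<in> E" using path_edge[OF p, of 0] l by simp
  moreover have "qs!0 = hd qs" by (rule hd_nth0) (use l in linarith)
  moreover note h
  ultimately have "{qs!1, W!j} \<in> E" by (simp add: insert_commute)
  then show ?thesis using ear_nbr[OF e j] by blast
qed

lemma exitL:
  assumes e: "ear_ctx V E V' W m" and p: "is_path V E qs" and h: "hd qs = W!j"
    and j: "0<j" "j<m" and l: "1 < length qs" and s: "qs!1 = W!(j-1)" and lst: "last qs \<in> V'"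
  shows "j < length qs"
proof (rule ccontr)
  assume "\<not> j < length qs"
  then have t: "length qs - 1 < length qs" "length qs - 1 \<le> j" using l by auto
  have "qs ! (length qs - 1) = W!(j - (length qs - 1))" using dirL'[OF e p h j l s t] .
  moreover have "last qs = qs ! (length qs - 1)" using last_nth[of qs] l by linarith
  moreover have "W!(j - (length qs - 1)) \<notin> V'" using ear_inner[OF e] \<open>\<not> j < length qs\<close> j l by auto
  ultimately show False using lst by simp
qed

lemma exitR:
  assumes e: "ear_ctx V E V' W m" and p: "is_path V E qs" and h: "hd qs = W!j"
    and j: "0<j" "j<m" and l: "1 < length qs" and s: "qs!1 = W!(Suc j)" and lst: "last qs \<in> V'"
  shows "m - j < length qs"
proof (rule ccontr)
  assume "\<not> m - j < length qs"
  then have t: "length qs - 1 < length qs" "length qs - 1 \<le> m - j" using l by auto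
  have "qs ! (length qs - 1) = W!(j + (length qs - 1))" using dirR'[OF e p h j l s t] .
  moreover have "last qs = qs ! (length qs - 1)" using last_nth[of qs] l by linarith
  moreover have "W!(j + (length qs - 1)) \<notin> V'" using ear_inner[OF e] \<open>\<not> m - j < length qs\<close> j l by auto
  ultimately show False using lst by simp
qed

lemma ear_local:
  assumes e: "ear_ctx V E V' W m" and p: "is_path V E ps" and h: "hd ps \<in> V'" and lst: "last ps \<in> V'"
    and len: "path_len ps < m"
  shows "set ps \<subseteq> V'"
proof (rule ccontr)
  assume "\<not> set ps \<subseteq> V'"
  then obtain y where "y \<in> set ps" "y \<notin> V'" by blast
  then obtain k where k: "k < length ps" "ps ! k \<notin> V'" by (metis in_set_conv_nth)
  have "ps ! k \<in> V" using k path_set[OF p] by auto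
  then obtain j where j: "0<j" "j<m" "ps!k = W!j" using ear_notV'[OF e] k by blast
  have k0: "k \<noteq> 0"
  proof
    assume "k = 0" then show False using k h hd_nth0[of ps] by simp
  qed
  have kl: "k \<noteq> length ps - 1"
  proof
    assume "k = length ps - 1" then show False using k lst last_nth[of ps] path_ne[OF p] by simp
  qed
  define lp where "lp = rev (take (Suc k) ps)"
  define rp where "rp = drop k ps"
  have lpn: "lp ! t = ps ! (k - t)" if "t \<le> k" for t
    using that k unfolding lp_def by (simp add: rev_nth)
  have rpn: "rp ! t = ps ! (k + t)" if "k + t < length ps" for t
    using that unfolding rp_def by simp
  have lpl: "length lp = Suc k" using k unfolding lp_def by simp
  have rpl: "length rp = length ps - k" unfolding rp_def by simp
  have plp: "is_path V E lp" unfolding lp_def by (rule is_path_rev, rule is_path_take[OF p]) simp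
  have prp: "is_path V E rp" unfolding rp_def by (rule is_path_drop[OF p k(1)])
  have hlp: "hd lp = W!j" using lpn[of 0] j lpl hd_nth0[of lp] by simp
  have hrp: "hd rp = W!j" using rpn[of 0] j k rpl hd_nth0[of rp] by simp
  have llp: "last lp \<in> V'" using lpn[of k] lpl last_nth[of lp] h hd_nth0[of ps] k path_ne[OF p] by simp
  have lrp: "last rp \<in> V'" using rpn[of "length ps - 1 - k"] rpl last_nth[of rp] lst last_nth[of ps] k kl path_ne[OF p] by simp
  have l1: "1 < length lp" using lpl k0 by simp
  have r1: "1 < length rp" using rpl k kl by simp
  have d: "lp ! 1 \<noteq> rp ! 1"
    using lpn[of 1] rpn[of 1] k0 k kl path_distinct[OF p] by (simp add: nth_eq_iff_index_eq)
  have sl: "lp!1 = W!(j-1) \<or> lp!1 = W!(Suc j)" using ear_step[OF e plp hlp j(1,2) l1] .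
  have sr: "rp!1 = W!(j-1) \<or> rp!1 = W!(Suc j)" using ear_step[OF e prp hrp j(1,2) r1] .
  have "m \<le> length ps - 1"
  proof (cases "lp!1 = W!(j-1)")
    case True
    then have "rp!1 = W!(Suc j)" using d sr by auto
    then have "m - j < length rp" using exitR[OF e prp hrp j(1,2) r1 _ lrp] by simp
    moreover have "j < length lp" using exitL[OF e plp hlp j(1,2) l1 True llp] .
    ultimately show ?thesis using lpl rpl by linarith
  next
    case False
    then have a: "lp!1 = W!(Suc j)" using sl by auto
    then have "rp!1 = W!(j - 1)" using d sr by auto
    then have "j < length rp" using exitL[OF e prp hrp j(1,2) r1 _ lrp] by simp
    moreover have "m - j < length lp" using exitR[OF e plp hlp j(1,2) l1 a llp] .
    ultimately show ?thesis using lpl rpl by linarith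
  qed
  then show False using len unfolding path_len_def by simp
qed

lemma WReach_single: "a \<in> V' \<Longrightarrow> (a,a) \<in> L' \<Longrightarrow> a \<in> WReach V' E' L' y a"
  unfolding WReach_def
  by (auto intro!: exI[of _ "[a]"] is_path_single simp: path_len_def internal_def)

lemma ear_vertex:
  assumes e: "ear_ctx V E V' W m"
    and E': "E' = {e\<in>E. e \<inter> (V - V') = {}}"
    and o0: "\<forall>y z. y \<in> V' \<longrightarrow> z \<in> V' \<longrightarrow> ((y,z) \<in> L \<longleftrightarrow> (y,z) \<in> L')"
    and o1: "\<forall>y z. (y,z) \<in> L \<longrightarrow> z \<in> V' \<longrightarrow> y \<in> V'"
    and o2: "\<forall>j. 0<j \<longrightarrow> j<m \<longrightarrow> (W!p, W!j) \<in> L"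
    and o3: "\<forall>i j. 0<i \<longrightarrow> i<p \<longrightarrow> 0<j \<longrightarrow> j<p \<longrightarrow> (W!j, W!i) \<in> L \<longrightarrow> j \<le> i"
    and anti: "antisym L"
    and refl': "\<forall>y\<in>V'. (y,y) \<in> L'"
    and pq: "q \<le> p" "q \<le> m - p" "x < q"
    and i: "0 < i" "i \<le> p"
  shows "WReach V E L x (W!i) \<subseteq> (\<lambda>j. W!j) ` {j. 0<j \<and> j \<le> i \<and> i \<le> j + x}
     \<union> (if i \<le> x then WReach V' E' L' (x - i) (W!0) else {})
     \<union> (if i < p \<and> p \<le> i + x then {W!p} else {})"
proof
  fix u assume "u \<in> WReach V E L x (W!i)"
  then obtain ps where uV: "u \<in> V" and uv: "(u, W!i) \<in> L" and p: "is_path V E ps"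
    and hps: "hd ps = u" and lps: "last ps = W!i" and lenps: "path_len ps \<le> x"
    and int: "\<forall>w\<in>internal ps. (u, w) \<in> L \<and> u \<noteq> w"
    unfolding WReach_def by blast
  have len: "length W = Suc m" using ear_len[OF e] .
  have pm: "p < m" "0 < p" using pq by auto
  define qs where "qs = rev ps"
  have pq': "is_path V E qs" unfolding qs_def by (rule is_path_rev[OF p])
  have ne: "ps \<noteq> []" using path_ne[OF p] .
  have hqs: "hd qs = W!i" unfolding qs_def using lps ne by (simp add: hd_rev)
  have lqs: "last qs = u" unfolding qs_def using hps ne by (simp add: last_rev)
  have iqs: "internal qs = internal ps" unfolding qs_def by (rule internal_rev)
  have lenq: "length qs = length ps" unfolding qs_def by simp
  define n where "n = length qs - 1"
  have nlq: "n < length qs" using ne lenq unfolding n_def by simp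
  have nx: "n \<le> x" using lenps lenq unfolding n_def path_len_def by simp
  have un: "u = qs ! n" using lqs last_nth[of qs] ne lenq unfolding n_def by simp
  have inti: "(u, qs!t) \<in> L \<and> u \<noteq> qs!t" if "0 < t" "t < n" for t
    using int iqs internal_nth[of t qs] that unfolding n_def by auto
  let ?S1 = "(\<lambda>j. W!j) ` {j. 0<j \<and> j \<le> i \<and> i \<le> j + x}"
  let ?S2 = "(if i \<le> x then WReach V' E' L' (x - i) (W!0) else {})"
  let ?S3 = "(if i < p \<and> p \<le> i + x then {W!p} else {})"
  show "u \<in> ?S1 \<union> ?S2 \<union> ?S3"
  proof (cases "n = 0")
    case True
    then have "u = W!i" using un hqs ne lenq hd_nth0[of qs] by simp
    then show ?thesis using i by auto
  next
    case False
    then have l1: "1 < length qs" unfolding n_def by simp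
    have im: "i < m" using i pm by simp
    have st: "qs!1 = W!(i-1) \<or> qs!1 = W!(Suc i)" using ear_step[OF e pq' hqs i(1) im l1] .
    show ?thesis
    proof (cases "qs!1 = W!(i-1)")
      case L: True
      show ?thesis
      proof (cases "n < i")
        case True
        have uq: "u = W!(i-n)" using dirL'[OF e pq' hqs i(1) im l1 L, of n] True un nlq by simp
        have "i < p"
        proof (rule ccontr)
          assume "\<not> i < p" then have ip: "i = p" using i by simp
          have "(W!p, u) \<in> L" using o2 uq True pm ip by simp
          moreover have "u \<noteq> W!p" using uq ear_inj[OF e, of "i-n" p] True False pm ip by simp
          ultimately show False using uv anti ip by (auto dest: antisymD)
        qed
        then show ?thesis using uq True nx by auto
      next
        case False
        have q0: "qs!i = W!0" using dirL'[OF e pq' hqs i(1) im l1 L, of i] False nlq by simp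
        have ix: "i \<le> x" using False nx by simp
        have a0: "W!0 \<in> V'" using ear_end0[OF e] .
        show ?thesis
        proof (cases "n = i")
          case True
          then have "u = W!0" using un q0 by simp
          then have "u \<in> ?S2" using ix WReach_single[OF a0] refl' a0 by auto
          then show ?thesis by blast
        next
          case False
          then have ni: "i < n" using \<open>\<not> n < i\<close> by simp
          have ua: "(u, W!0) \<in> L" "u \<noteq> W!0" using inti[of i] i ni q0 by auto
          have uV': "u \<in> V'" using o1 ua a0 by blast
          define ts where "ts = drop i qs"
          have pts: "is_path V E ts" unfolding ts_def by (rule is_path_drop[OF pq']) (use ni nlq in simp)
          have hts: "hd ts = W!0" unfolding ts_def using q0 ni nlq by (simp add: hd_drop_conv_nth)
          have lts: "last ts = u" unfolding ts_def using lqs ni nlq by simp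
          have plts: "path_len ts < m" using nx pq unfolding ts_def path_len_def n_def by simp
          have sts: "set ts \<subseteq> V'" using ear_local[OF e pts _ _ plts] hts lts a0 uV' by simp
          have disj: "V' \<inter> (V - V') = {}" by blast
          have pts': "is_path V' E' (rev ts)" unfolding E'
            by (rule path_restrict[OF is_path_rev[OF pts]]) (use sts disj in auto)
          have tne: "ts \<noteq> []" using path_ne[OF pts] .
          have "u \<in> WReach V' E' L' (x - i) (W!0)"
            unfolding WReach_def
          proof (intro CollectI conjI exI[of _ "rev ts"])
            show "u \<in> V'" by fact
            show "(u, W!0) \<in> L'" using o0 ua uV' a0 by blast
            show "is_path V' E' (rev ts)" by fact
            show "hd (rev ts) = u" using lts tne by (simp add: hd_rev)
            show "last (rev ts) = W!0" using hts tne by (simp add: last_rev)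
            show "path_len (rev ts) \<le> x - i" using nx unfolding ts_def path_len_def n_def by simp
            show "\<forall>w\<in>internal (rev ts). (u, w) \<in> L' \<and> u \<noteq> w"
            proof
              fix w assume w: "w \<in> internal (rev ts)"
              then have w1: "w \<in> internal ps" using internal_drop[of i qs] iqs unfolding internal_rev ts_def by blast
              have "w \<in> V'" using w sts internal_set[of ts] unfolding internal_rev by blast
              then show "(u, w) \<in> L' \<and> u \<noteq> w" using int w1 o0 uV' by blast
            qed
          qed
          then show ?thesis using ix by auto
        qed
      qed
    next
      case False
      then have R: "qs!1 = W!(Suc i)" using st by simp
      have nm: "n \<le> m - i" using nx pq i by simp
      have uq: "u = W!(i+n)" using dirR'[OF e pq' hqs i(1) im l1 R, of n] nm un nlq by simp
      have inm: "i + n < m" using nx pq i by simp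
      have n0: "0 < n" using \<open>n \<noteq> 0\<close> by simp
      show ?thesis
      proof (cases "i + n < p")
        case True
        then have "i + n \<le> i" using o3[rule_format, of i "i+n"] uv uq i by simp
        then show ?thesis using n0 by simp
      next
        case False
        show ?thesis
        proof (cases "i + n = p")
          case True
          then show ?thesis using uq n0 nx by auto
        next
          case False
          then have gp: "p < i + n" using \<open>\<not> i + n < p\<close> by simp
          have up: "(W!p, u) \<in> L" using o2 uq inm i by simp
          have une: "u \<noteq> W!p" using uq ear_inj[OF e, of "i+n" p] gp inm pm by simp
          have "(u, W!p) \<in> L"
          proof (cases "i = p")
            case True then show ?thesis using uv by simp
          next
            case False
            then have ip: "i < p" using i by simp
            have "qs!(p-i) = W!(i + (p - i))"
              using dirR'[OF e pq' hqs i(1) im l1 R, of "p-i"] ip gp pm nlq by simp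
            then have "qs!(p-i) = W!p" using ip by simp
            then show ?thesis using inti[of "p-i"] ip gp by simp
          qed
          then show ?thesis using up une anti by (auto dest: antisymD)
        qed
      qed
    qed
  qed
qed

lemma WReach_sub_V: "WReach V E L x v \<subseteq> V"
  unfolding WReach_def by auto

lemma WReach_zero: "WReach V E L 0 v \<subseteq> {v}"
proof
  fix u assume "u \<in> WReach V E L 0 v"
  then obtain ps where p: "is_path V E ps" "hd ps = u" "last ps = v" "path_len ps \<le> 0"
    unfolding WReach_def by blast
  then have "length ps = 1" using path_ne[OF p(1)] unfolding path_len_def by (cases ps) auto
  then obtain a where "ps = [a]" by (cases ps) auto
  then show "u \<in> {v}" using p by simp
qed

lemma lin_ext:
  assumes a: "linear_order_on V' L'" and b: "linear_order_on I R" and d: "V' \<inter> I = {}"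
  shows "linear_order_on (V' \<union> I) (L' \<union> V' \<times> I \<union> R)"
proof -
  have a1: "L' \<subseteq> V' \<times> V'" "\<forall>x\<in>V'. (x,x) \<in> L'" "trans L'" "antisym L'"
    "\<forall>x\<in>V'. \<forall>y\<in>V'. x \<noteq> y \<longrightarrow> (x, y) \<in> L' \<or> (y, x) \<in> L'"
    using a unfolding linear_order_on_def partial_order_on_def preorder_on_def refl_on_def total_on_def
    by auto
  have b1: "R \<subseteq> I \<times> I" "\<forall>x\<in>I. (x,x) \<in> R" "trans R" "antisym R"
    "\<forall>x\<in>I. \<forall>y\<in>I. x \<noteq> y \<longrightarrow> (x, y) \<in> R \<or> (y, x) \<in> R"
    using b unfolding linear_order_on_def partial_order_on_def preorder_on_def refl_on_def total_on_def
    by auto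
  let ?L = "L' \<union> V' \<times> I \<union> R"
  have t: "trans ?L"
  proof (rule transI)
    fix x y z assume xy: "(x,y) \<in> ?L" and yz: "(y,z) \<in> ?L"
    show "(x,z) \<in> ?L"
    proof (cases "(x,y) \<in> L'")
      case True
      then have "x \<in> V'" "y \<in> V'" using a1(1) by auto
      then show ?thesis using yz True a1(1,3) b1(1) d by (auto dest: transD)
    next
      case False
      show ?thesis
      proof (cases "(x,y) \<in> R")
        case True
        then have "x \<in> I" "y \<in> I" using b1(1) by auto
        then show ?thesis using yz True a1(1) b1(1,3) d by (auto dest: transD)
      next
        case False
        then have "x \<in> V'" "y \<in> I" using xy \<open>(x,y) \<notin> L'\<close> by auto
        then show ?thesis using yz a1(1) b1(1) d by auto
      qed
    qed
  qed
  have an: "antisym ?L"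
  proof (rule antisymI)
    fix x y assume xy: "(x,y) \<in> ?L" and yx: "(y,x) \<in> ?L"
    show "x = y"
    proof (cases "x \<in> V'")
      case True
      then show ?thesis using xy yx a1(1,4) b1(1) d by (auto dest: antisymD)
    next
      case False
      then show ?thesis using xy yx a1(1) b1(1,4) d by (auto dest: antisymD)
    qed
  qed
  show ?thesis
    unfolding linear_order_on_def partial_order_on_def preorder_on_def refl_on_def total_on_def
    using t an a1(1,2,5) b1(1,2,5) by blast
qed

lemma old_sub:
  assumes V'V: "V' \<subseteq> V" and E': "E' = {e\<in>E. e \<inter> (V - V') = {}}"
    and o0: "\<forall>y z. y \<in> V' \<longrightarrow> z \<in> V' \<longrightarrow> ((y,z) \<in> L \<longleftrightarrow> (y,z) \<in> L')"
    and o1: "\<forall>y z. (y,z) \<in> L \<longrightarrow> z \<in> V' \<longrightarrow> y \<in> V'"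
    and loc: "\<forall>ps. is_path V E ps \<longrightarrow> hd ps \<in> V' \<longrightarrow> last ps \<in> V' \<longrightarrow> path_len ps \<le> x \<longrightarrow> set ps \<subseteq> V'"
    and v: "v \<in> V'"
  shows "WReach V E L x v \<subseteq> WReach V' E' L' x v"
proof
  fix u assume "u \<in> WReach V E L x v"
  then obtain ps where uV: "u \<in> V" and uv: "(u, v) \<in> L" and p: "is_path V E ps"
    and hps: "hd ps = u" and lps: "last ps = v" and lenps: "path_len ps \<le> x"
    and int: "\<forall>w\<in>internal ps. (u, w) \<in> L \<and> u \<noteq> w"
    unfolding WReach_def by blast
  have uV': "u \<in> V'" using o1 uv v by blast
  have s: "set ps \<subseteq> V'" using loc p hps lps lenps uV' v by blast
  have p': "is_path V' E' ps" unfolding E' by (rule path_restrict[OF p s]) blast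
  show "u \<in> WReach V' E' L' x v"
    unfolding WReach_def
  proof (intro CollectI conjI exI[of _ ps])
    show "u \<in> V'" by fact
    show "(u,v) \<in> L'" using o0 uV' v uv by blast
    show "\<forall>w\<in>internal ps. (u, w) \<in> L' \<and> u \<noteq> w"
      using int internal_set[of ps] s o0 uV' by blast
  qed (use p' hps lps lenps in auto)
qed

lemma small_deg_loc:
  assumes p: "is_path V E ps" and V': "V' = V - {v}" and nb: "\<forall>y. {y, v} \<in> E \<longrightarrow> y = w"
    and h: "hd ps \<in> V'" and l: "last ps \<in> V'"
  shows "set ps \<subseteq> V'"
proof (rule ccontr)
  assume "\<not> set ps \<subseteq> V'"
  then obtain y where "y \<in> set ps" "y \<notin> V'" by blast
  then obtain k where k: "k < length ps" "ps ! k \<notin> V'" by (metis in_set_conv_nth)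
  have ne: "ps \<noteq> []" using path_ne[OF p] .
  have "ps ! k \<in> V" using k path_set[OF p] nth_mem by blast
  then have kv: "ps ! k = v" using k(2) V' by blast
  have k0: "k \<noteq> 0"
  proof
    assume "k = 0" then show False using k h hd_nth0[of ps] ne by simp
  qed
  have kl: "Suc k < length ps"
  proof (rule ccontr)
    assume "\<not> Suc k < length ps" then have "k = length ps - 1" using k by simp
    then show False using k l last_nth[of ps] ne by simp
  qed
  have "{ps ! (k-1), ps ! Suc (k-1)} \<in> E" using path_edge[OF p, of "k-1"] kl k0 by simp
  then have "{ps ! (k-1), v} \<in> E" using k0 kv by simp
  then have a: "ps ! (k-1) = w" using nb by blast
  have "{ps ! k, ps ! Suc k} \<in> E" using path_edge[OF p kl] .
  then have "{ps ! Suc k, v} \<in> E" using kv by (simp add: insert_commute)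
  then have b: "ps ! Suc k = w" using nb by blast
  have "k - 1 \<noteq> Suc k" by simp
  then have "ps ! (k-1) \<noteq> ps ! Suc k" using path_distinct[OF p] kl by (simp add: nth_eq_iff_index_eq)
  then show False using a b by simp
qed

lemma pendant_sub:
  assumes V': "V' = V - {v}" and v: "v \<in> V" and nb: "\<forall>y. {y, v} \<in> E \<longrightarrow> y = w" and w: "w \<in> V'"
    and E': "E' = {e\<in>E. e \<inter> (V - V') = {}}"
    and o0: "\<forall>y z. y \<in> V' \<longrightarrow> z \<in> V' \<longrightarrow> ((y,z) \<in> L \<longleftrightarrow> (y,z) \<in> L')"
    and o1: "\<forall>y z. (y,z) \<in> L \<longrightarrow> z \<in> V' \<longrightarrow> y \<in> V'"
    and refl': "\<forall>y\<in>V'. (y,y) \<in> L'"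
  shows "WReach V E L x v \<subseteq> {v} \<union> WReach V' E' L' (x - 1) w"
proof
  fix u assume "u \<in> WReach V E L x v"
  then obtain ps where uV: "u \<in> V" and uv: "(u, v) \<in> L" and p: "is_path V E ps"
    and hps: "hd ps = u" and lps: "last ps = v" and lenps: "path_len ps \<le> x"
    and int: "\<forall>w\<in>internal ps. (u, w) \<in> L \<and> u \<noteq> w"
    unfolding WReach_def by blast
  define qs where "qs = rev ps"
  have pq': "is_path V E qs" unfolding qs_def by (rule is_path_rev[OF p])
  have ne: "ps \<noteq> []" using path_ne[OF p] .
  have qne: "qs \<noteq> []" using ne unfolding qs_def by simp
  have hqs: "hd qs = v" unfolding qs_def using lps ne by (simp add: hd_rev)
  have lqs: "last qs = u" unfolding qs_def using hps ne by (simp add: last_rev)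
  have iqs: "internal qs = internal ps" unfolding qs_def by (rule internal_rev)
  have lenq: "length qs = length ps" unfolding qs_def by simp
  define n where "n = length qs - 1"
  have nlq: "n < length qs" using ne lenq unfolding n_def by simp
  have nx: "n \<le> x" using lenps lenq unfolding n_def path_len_def by simp
  have un: "u = qs ! n" using lqs last_nth[of qs] qne unfolding n_def by simp
  show "u \<in> {v} \<union> WReach V' E' L' (x - 1) w"
  proof (cases "n = 0")
    case True
    then show ?thesis using un hqs hd_nth0[of qs] qne by simp
  next
    case False
    have "{qs!0, qs!Suc 0} \<in> E" using path_edge[OF pq', of 0] False nlq by simp
    then have "{qs!1, v} \<in> E" using hqs hd_nth0[of qs] qne by (simp add: insert_commute)
    then have q1: "qs!1 = w" using nb by simp
    define ts where "ts = drop 1 qs"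
    have pts: "is_path V E ts" unfolding ts_def by (rule is_path_drop[OF pq']) (use False nlq in simp)
    have tne: "ts \<noteq> []" using path_ne[OF pts] .
    have hts: "hd ts = w" unfolding ts_def using q1 False nlq by (simp add: hd_drop_conv_nth)
    have lts: "last ts = u" unfolding ts_def using lqs False nlq by simp
    have vts: "v \<notin> set ts"
    proof
      assume "v \<in> set ts"
      then obtain k where k: "k < length ts" "ts ! k = v" by (metis in_set_conv_nth)
      then have "qs ! Suc k = qs ! 0" using hqs hd_nth0[of qs] qne unfolding ts_def by simp
      moreover have "Suc k < length qs" "0 < length qs" using k unfolding ts_def by auto
      ultimately show False using nth_eq_iff_index_eq[OF path_distinct[OF pq'], of "Suc k" 0] by simp
    qed
    have sts: "set ts \<subseteq> V'" using path_set[OF pts] vts V' by blast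
    have pts': "is_path V' E' (rev ts)" unfolding E'
      by (rule path_restrict[OF is_path_rev[OF pts]]) (use sts in auto)
    have uV': "u \<in> V'" using sts lts last_in_set[OF tne] by auto
    show ?thesis
    proof (cases "n = 1")
      case True
      then have "u = w" using un q1 by simp
      then show ?thesis using WReach_single[of w V' L' E' "x-1"] w refl' by auto
    next
      case False
      have uw: "(u, w) \<in> L" "u \<noteq> w" using int iqs internal_nth[of 1 qs] q1 \<open>n \<noteq> 0\<close> False nlq
        unfolding n_def by auto
      have "u \<in> WReach V' E' L' (x - 1) w"
        unfolding WReach_def
      proof (intro CollectI conjI exI[of _ "rev ts"])
        show "u \<in> V'" by fact
        show "(u, w) \<in> L'" using o0 uw uV' w by blast
        show "is_path V' E' (rev ts)" by fact
        show "hd (rev ts) = u" using lts tne by (simp add: hd_rev)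
        show "last (rev ts) = w" using hts tne by (simp add: last_rev)
        show "path_len (rev ts) \<le> x - 1" using nx unfolding ts_def path_len_def n_def by simp
        show "\<forall>y\<in>internal (rev ts). (u, y) \<in> L' \<and> u \<noteq> y"
        proof
          fix y assume y: "y \<in> internal (rev ts)"
          then have y1: "y \<in> internal ps" using internal_drop[of 1 qs] iqs unfolding internal_rev ts_def by blast
          have "y \<in> V'" using y sts internal_set[of ts] unfolding internal_rev by blast
          then show "(u, y) \<in> L' \<and> u \<noteq> y" using int y1 o0 uV' by blast
        qed
      qed
      then show ?thesis by blast
    qed
  qed
qed

lemma isolated_sub:
  assumes nb: "\<forall>y. {y, v} \<notin> E"
  shows "WReach V E L x v \<subseteq> {v}"
proof
  fix u assume "u \<in> WReach V E L x v"
  then obtain ps where p: "is_path V E ps"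
    and hps: "hd ps = u" and lps: "last ps = v"
    unfolding WReach_def by blast
  have ne: "ps \<noteq> []" using path_ne[OF p] .
  show "u \<in> {v}"
  proof (cases "length ps = 1")
    case True
    then obtain a where "ps = [a]" by (cases ps) auto
    then show ?thesis using hps lps by simp
  next
    case False
    then have l: "Suc (length ps - 2) < length ps" using ne by (cases ps) auto
    have "{ps ! (length ps - 2), ps ! Suc (length ps - 2)} \<in> E" using path_edge[OF p l] .
    moreover have "Suc (length ps - 2) = length ps - 1" using l by simp
    ultimately have "{ps ! (length ps - 2), v} \<in> E" using lps last_nth[of ps] ne by simp
    then show ?thesis using nb by blast
  qed
qed

lemma card_A1: "card {j::nat. 0<j \<and> j \<le> i \<and> i \<le> j + x} \<le> i"
proof -
  have "{j::nat. 0<j \<and> j \<le> i \<and> i \<le> j + x} \<subseteq> {1..i}" by auto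
  then show ?thesis using card_mono[of "{1..i}"] by fastforce
qed

lemma card_A2: "card {j::nat. 0<j \<and> j \<le> i \<and> i \<le> j + x} \<le> x + 1"
proof -
  have "{j::nat. 0<j \<and> j \<le> i \<and> i \<le> j + x} \<subseteq> {i-x..i}" by auto
  then have "card {j::nat. 0<j \<and> j \<le> i \<and> i \<le> j + x} \<le> card {i-x..i}" by (intro card_mono) auto
  then show ?thesis by simp
qed

lemma ear_card:
  assumes e: "ear_ctx V E V' W m"
    and E': "E' = {e\<in>E. e \<inter> (V - V') = {}}"
    and o0: "\<forall>y z. y \<in> V' \<longrightarrow> z \<in> V' \<longrightarrow> ((y,z) \<in> L \<longleftrightarrow> (y,z) \<in> L')"
    and o1: "\<forall>y z. (y,z) \<in> L \<longrightarrow> z \<in> V' \<longrightarrow> y \<in> V'"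
    and o2: "\<forall>j. 0<j \<longrightarrow> j<m \<longrightarrow> (W!p, W!j) \<in> L"
    and o3: "\<forall>i j. 0<i \<longrightarrow> i<p \<longrightarrow> 0<j \<longrightarrow> j<p \<longrightarrow> (W!j, W!i) \<in> L \<longrightarrow> j \<le> i"
    and anti: "antisym L"
    and refl': "\<forall>y\<in>V'. (y,y) \<in> L'"
    and pq: "q \<le> p" "q \<le> m - p" "r < q" "x \<le> r"
    and i: "0 < i" "i \<le> p"
    and fin: "finite V'"
    and IH: "\<forall>y v. y \<le> r \<longrightarrow> v \<in> V' \<longrightarrow> real (card (WReach V' E' L' y v)) \<le> f y"
    and Fa: "\<forall>x. x \<le> r \<longrightarrow> 1 \<le> f x"
    and Fc: "\<forall>x. 1 \<le> x \<longrightarrow> x \<le> r \<longrightarrow> real x + 2 \<le> f x"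
    and Fd: "\<forall>i x. 1 \<le> i \<longrightarrow> i \<le> x \<longrightarrow> x \<le> r \<longrightarrow>
              real i + f (x - i) + (if q \<le> x + i then 1 else 0) \<le> f x"
  shows "real (card (WReach V E L x (W!i))) \<le> f x"
proof -
  let ?A = "{j. 0<j \<and> j \<le> i \<and> i \<le> j + x}"
  let ?S1 = "(\<lambda>j. W!j) ` ?A"
  let ?S2 = "(if i \<le> x then WReach V' E' L' (x - i) (W!0) else {})"
  let ?S3 = "(if i < p \<and> p \<le> i + x then {W!p} else {})"
  have sub: "WReach V E L x (W!i) \<subseteq> ?S1 \<union> ?S2 \<union> ?S3"
    by (rule ear_vertex[OF e E' o0 o1 o2 o3 anti refl' pq(1,2) _ i]) (use pq in simp)
  have fA: "finite ?A" by (rule finite_subset[of _ "{..i}"]) auto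
  have f2: "finite ?S2" using finite_subset[OF WReach_sub_V fin] by simp
  have fU: "finite (?S1 \<union> ?S2 \<union> ?S3)" using fA f2 by simp
  have c: "card (WReach V E L x (W!i)) \<le> card ?S1 + card ?S2 + card ?S3"
  proof -
    have "card (WReach V E L x (W!i)) \<le> card (?S1 \<union> ?S2 \<union> ?S3)" by (rule card_mono[OF fU sub])
    also have "\<dots> \<le> card (?S1 \<union> ?S2) + card ?S3" by (rule card_Un_le)
    also have "\<dots> \<le> card ?S1 + card ?S2 + card ?S3" using card_Un_le[of ?S1 ?S2] by simp
    finally show ?thesis .
  qed
  have c1: "card ?S1 \<le> i" "card ?S1 \<le> x + 1"
    using card_image_le[OF fA, of "\<lambda>j. W!j"] card_A1[of i x] card_A2[of i x] by linarith+
  have c3: "card ?S3 \<le> (if q \<le> x + i then 1 else 0)" using pq by auto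
  have c3': "card ?S3 \<le> 1" by auto
  have a0: "W!0 \<in> V'" using ear_end0[OF e] .
  show ?thesis
  proof (cases "i \<le> x")
    case True
    have c2: "real (card ?S2) \<le> f (x - i)" using True IH a0 pq by simp
    have "real (card (WReach V E L x (W!i))) \<le> real i + f (x - i) + (if q \<le> x + i then 1 else 0)"
      using c c1 c2 c3 by (simp split: if_splits)
    also have "\<dots> \<le> f x" using Fd True i pq by simp
    finally show ?thesis .
  next
    case False
    then have s2: "card ?S2 = 0" by simp
    show ?thesis
    proof (cases "x = 0")
      case True
      then have "card ?S3 = 0" using i by auto
      then have "card (WReach V E L x (W!i)) \<le> 1" using c c1 s2 True by simp
      then show ?thesis using Fa pq(4) by (smt (verit) of_nat_le_1_iff)
    next
      case False
      have "card (WReach V E L x (W!i)) \<le> x + 2" using c c1 s2 c3' by simp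
      then have "real (card (WReach V E L x (W!i))) \<le> real x + 2" by simp
      also have "\<dots> \<le> f x" using Fc False pq by simp
      finally show ?thesis .
    qed
  qed
qed

lemma nbr_finite: "graph V E \<Longrightarrow> finite {u. {u, v} \<in> E}"
proof -
  assume g: "graph V E"
  have "{u. {u, v} \<in> E} \<subseteq> V"
  proof
    fix u assume "u \<in> {u. {u, v} \<in> E}"
    then obtain a b where "{u,v} = {a,b}" "a \<in> V" "b \<in> V" using g unfolding graph_def by blast
    then show "u \<in> V" by (metis doubleton_eq_iff)
  qed
  then show ?thesis using g unfolding graph_def by (auto intro: finite_subset)
qed

lemma no_loop: "graph V E \<Longrightarrow> {v, v} \<notin> E"
  unfolding graph_def by (auto simp: doubleton_eq_iff)

lemma edge_in_V: "graph V E \<Longrightarrow> {u, v} \<in> E \<Longrightarrow> u \<in> V"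
  unfolding graph_def by (metis doubleton_eq_iff)

lemma card2_eq: "finite N \<Longrightarrow> card N = 2 \<Longrightarrow> a \<in> N \<Longrightarrow> b \<in> N \<Longrightarrow> a \<noteq> b \<Longrightarrow> N = {a, b}"
  by (metis card_2_iff doubleton_eq_iff insertE singletonD)

lemma ear_ctx_of:
  assumes g: "graph V E" and se: "strict_ear V E ps" and m2: "2 \<le> path_len ps"
  shows "ear_ctx V E (V - internal ps) ps (path_len ps)"
proof -
  let ?m = "path_len ps"
  have p: "is_path V E ps" using se unfolding strict_ear_def by simp
  have ne: "ps \<noteq> []" using path_ne[OF p] .
  have len: "length ps = Suc ?m" using ne unfolding path_len_def by simp
  have I: "internal ps = {ps!j | j. 0<j \<and> j<?m}" unfolding internal_def using len by auto
  have N: "({y, ps!j} \<in> E \<longleftrightarrow> y = ps!(j-1) \<or> y = ps!(Suc j))" if j: "0<j" "j<?m" for j y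
  proof -
    have "ps!j \<in> internal ps" using I j by auto
    then have d: "card {u. {u, ps!j} \<in> E} = 2" using se unfolding strict_ear_def degree_def by simp
    have a: "ps!(j-1) \<in> {u. {u, ps!j} \<in> E}" using path_edge[OF p, of "j-1"] j len by simp
    have b: "ps!(Suc j) \<in> {u. {u, ps!j} \<in> E}" using path_edge[OF p, of j] j len by (simp add: insert_commute)
    have "j - 1 \<noteq> Suc j" by simp
    then have ab: "ps!(j-1) \<noteq> ps!(Suc j)" using path_distinct[OF p] j len by (simp add: nth_eq_iff_index_eq)
    have "{u. {u, ps!j} \<in> E} = {ps!(j-1), ps!(Suc j)}" by (rule card2_eq[OF nbr_finite[OF g] d a b ab])
    then show ?thesis by blast
  qed
  show ?thesis unfolding ear_ctx_def
    using len path_distinct[OF p] path_set[OF p] m2 I N by blast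
qed

definition kk :: "nat \<Rightarrow> nat \<Rightarrow> nat \<Rightarrow> nat" where
  "kk m q j = (if j = q then 0 else if j < q then 2*j else 2*(m-j)+1)"

lemma kk_inj: "0 < a \<Longrightarrow> a < m \<Longrightarrow> 0 < b \<Longrightarrow> b < m \<Longrightarrow> kk m q a = kk m q b \<Longrightarrow> a = b"
  unfolding kk_def by (auto split: if_splits) presburger+

definition RR :: "'a list \<Rightarrow> nat \<Rightarrow> nat \<Rightarrow> ('a \<times> 'a) set" where
  "RR W m q = {(W!a, W!b) | a b. 0<a \<and> a<m \<and> 0<b \<and> b<m \<and> kk m q a \<le> kk m q b}"

lemma RR_mem:
  assumes e: "ear_ctx V E V' W m" and "0<a" "a<m" "0<b" "b<m"
  shows "(W!a, W!b) \<in> RR W m q \<longleftrightarrow> kk m q a \<le> kk m q b"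
proof
  assume "(W!a, W!b) \<in> RR W m q"
  then obtain a' b' where "W!a = W!a'" "W!b = W!b'" "0<a'" "a'<m" "0<b'" "b'<m" "kk m q a' \<le> kk m q b'"
    unfolding RR_def by blast
  then show "kk m q a \<le> kk m q b" using ear_inj[OF e, of a a'] ear_inj[OF e, of b b'] assms by simp
qed (use assms in \<open>auto simp: RR_def\<close>)

lemma RR_lin:
  assumes e: "ear_ctx V E V' W m"
  shows "linear_order_on {W!j | j. 0<j \<and> j<m} (RR W m q)"
  unfolding linear_order_on_def partial_order_on_def preorder_on_def refl_on_def total_on_def
proof (intro conjI)
  show "RR W m q \<subseteq> {W!j | j. 0<j \<and> j<m} \<times> {W!j | j. 0<j \<and> j<m}" unfolding RR_def by blast
  show "\<forall>x\<in>{W!j | j. 0<j \<and> j<m}. (x, x) \<in> RR W m q" unfolding RR_def by blast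
  show "trans (RR W m q)"
  proof (rule transI)
    fix x y z assume "(x,y) \<in> RR W m q" "(y,z) \<in> RR W m q"
    then obtain a b b' c where "x = W!a" "y = W!b" "y = W!b'" "z = W!c" "0<a" "a<m" "0<b" "b<m"
      "0<b'" "b'<m" "0<c" "c<m" "kk m q a \<le> kk m q b" "kk m q b' \<le> kk m q c"
      unfolding RR_def by blast
    then show "(x,z) \<in> RR W m q" using ear_inj[OF e, of b b'] unfolding RR_def by fastforce
  qed
  show "antisym (RR W m q)"
  proof (rule antisymI)
    fix x y assume "(x,y) \<in> RR W m q" "(y,x) \<in> RR W m q"
    then obtain a b where ab: "x = W!a" "y = W!b" "0<a" "a<m" "0<b" "b<m"
      unfolding RR_def by blast
    then have "kk m q a \<le> kk m q b" "kk m q b \<le> kk m q a"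
      using RR_mem[OF e] \<open>(x,y) \<in> RR W m q\<close> \<open>(y,x) \<in> RR W m q\<close> by blast+
    then show "x = y" using kk_inj[of a m b q] ab by simp
  qed
  show "\<forall>x\<in>{W!j | j. 0<j \<and> j<m}. \<forall>y\<in>{W!j | j. 0<j \<and> j<m}. x \<noteq> y \<longrightarrow> (x, y) \<in> RR W m q \<or> (y, x) \<in> RR W m q"
    unfolding RR_def by force
qed

lemma graph_del: assumes g: "graph V E" shows "graph (V - S) {e\<in>E. e \<inter> S = {}}"
  unfolding graph_def
proof (intro conjI ballI)
  show "finite (V - S)" using g unfolding graph_def by simp
next
  fix e assume e: "e \<in> {e \<in> E. e \<inter> S = {}}"
  then obtain u v where uv: "e = {u, v}" "u \<noteq> v" "u \<in> V" "v \<in> V" using g unfolding graph_def by blast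
  then have "u \<notin> S" "v \<notin> S" using e by auto
  then show "\<exists>u v. e = {u, v} \<and> u \<noteq> v \<and> u \<in> V - S \<and> v \<in> V - S" using uv by blast
qed

lemma good_parts:
  assumes "good_linear_order V E L f r"
  shows "linear_order_on V L" "\<forall>y v. y \<le> r \<longrightarrow> v \<in> V \<longrightarrow> real (card (WReach V E L y v)) \<le> f y"
  using assms unfolding good_linear_order_def by auto

lemma lin_parts:
  assumes "linear_order_on V L"
  shows "L \<subseteq> V \<times> V" "\<forall>y\<in>V. (y,y) \<in> L" "antisym L"
  using assms unfolding linear_order_on_def partial_order_on_def preorder_on_def refl_on_def by auto

lemma card_le_WR:
  assumes "WReach V E L x u \<subseteq> S" "finite S" "real (card S) \<le> c"
  shows "real (card (WReach V E L x u)) \<le> c"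
  using card_mono[OF assms(2,1)] assms(3) by linarith

lemma ear_V': "ear_ctx V E V' W m \<Longrightarrow> V' = V - {W!j | j. 0<j \<and> j<m}"
  unfolding ear_ctx_def by (elim conjE) assumption

lemma kk_q: "kk m q q = 0" unfolding kk_def by simp
lemma kk_lo: "a < q \<Longrightarrow> kk m q a = 2*a" unfolding kk_def by simp
lemma kk_hi: "q < a \<Longrightarrow> kk m q a = 2*(m-a)+1" unfolding kk_def by simp

lemma ear_step_good:
  assumes g: "graph V E" and se: "strict_ear V E ps" and pl: "2*q \<le> path_len ps" and rq: "r < q"
    and V'def: "V' = V - internal ps" and E'def: "E' = {e\<in>E. e \<inter> internal ps = {}}"
    and good: "good_linear_order V' E' L' f r"
    and Fa: "\<forall>x. x \<le> r \<longrightarrow> 1 \<le> f x"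
    and Fc: "\<forall>x. 1 \<le> x \<longrightarrow> x \<le> r \<longrightarrow> real x + 2 \<le> f x"
    and Fd: "\<forall>i x. 1 \<le> i \<longrightarrow> i \<le> x \<longrightarrow> x \<le> r \<longrightarrow>
              real i + f (x - i) + (if q \<le> x + i then 1 else 0) \<le> f x"
  shows "\<exists>L. good_linear_order V E L f r"
proof -
  define m where "m = path_len ps"
  have q1: "1 \<le> q" using rq by simp
  have m2: "2 \<le> m" using pl q1 unfolding m_def by simp
  have e: "ear_ctx V E V' ps m" unfolding V'def m_def by (rule ear_ctx_of[OF g se]) (use m2 m_def in simp)
  have p: "is_path V E ps" using se unfolding strict_ear_def by simp
  have intV: "internal ps \<subseteq> V" using internal_set[of ps] path_set[OF p] by blast
  define I where "I = {ps!j | j. 0<j \<and> j<m}"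
  have VV': "V - V' = internal ps" using intV unfolding V'def by blast
  have E': "E' = {e\<in>E. e \<inter> (V - V') = {}}" using E'def VV' by simp
  have V'I: "V' = V - I" unfolding I_def by (rule ear_V'[OF e])
  have IV: "I \<subseteq> V" unfolding I_def using ear_inV[OF e] by auto
  have lin': "linear_order_on V' L'" using good_parts(1)[OF good] .
  have IH: "\<forall>y v. y \<le> r \<longrightarrow> v \<in> V' \<longrightarrow> real (card (WReach V' E' L' y v)) \<le> f y"
    using good_parts(2)[OF good] .
  have L'sub: "L' \<subseteq> V' \<times> V'" and refl': "\<forall>y\<in>V'. (y,y) \<in> L'" using lin_parts[OF lin'] by auto
  define L where "L = L' \<union> V' \<times> I \<union> RR ps m q"
  have RRsub: "RR ps m q \<subseteq> I \<times> I"
  proof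
    fix z assume "z \<in> RR ps m q"
    then obtain a b where "z = (ps!a, ps!b)" "0<a" "a<m" "0<b" "b<m" unfolding RR_def by blast
    then show "z \<in> I \<times> I" unfolding I_def by blast
  qed
  have dI: "V' \<inter> I = {}" using V'I by blast
  have linR: "linear_order_on I (RR ps m q)" unfolding I_def by (rule RR_lin[OF e])
  have lin: "linear_order_on V L"
  proof -
    have "linear_order_on (V' \<union> I) L" unfolding L_def by (rule lin_ext[OF lin' linR dI])
    moreover have "V' \<union> I = V" using V'I IV by blast
    ultimately show ?thesis by simp
  qed
  have anti: "antisym L" using lin_parts(3)[OF lin] .
  have o0: "\<forall>y z. y \<in> V' \<longrightarrow> z \<in> V' \<longrightarrow> ((y,z) \<in> L \<longleftrightarrow> (y,z) \<in> L')"
  proof (intro allI impI)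
    fix y z assume "y \<in> V'" "z \<in> V'"
    then have "z \<notin> I" using dI by blast
    then show "(y,z) \<in> L \<longleftrightarrow> (y,z) \<in> L'" using RRsub unfolding L_def by blast
  qed
  have o1: "\<forall>y z. (y,z) \<in> L \<longrightarrow> z \<in> V' \<longrightarrow> y \<in> V'"
  proof (intro allI impI)
    fix y z assume "(y,z) \<in> L" "z \<in> V'"
    then have "z \<notin> I" using dI by blast
    then show "y \<in> V'" using RRsub L'sub \<open>(y,z) \<in> L\<close> unfolding L_def by blast
  qed
  have inI: "ps!j \<in> I" if "0<j" "j<m" for j using that unfolding I_def by blast
  have notV': "ps!j \<notin> V'" if "0<j" "j<m" for j using ear_inner[OF e] that by blast
  have inL: "(ps!a, ps!b) \<in> L \<longleftrightarrow> kk m q a \<le> kk m q b" if "0<a" "a<m" "0<b" "b<m" for a b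
  proof -
    have "(ps!a, ps!b) \<in> L \<longleftrightarrow> (ps!a, ps!b) \<in> RR ps m q"
    proof -
      have "ps!a \<notin> V'" using notV' that by blast
      then show ?thesis unfolding L_def using L'sub by blast
    qed
    then show ?thesis using RR_mem[OF e that] by simp
  qed
  have qm: "q < m" "q \<le> m - q" using pl q1 unfolding m_def by auto
  have o2: "\<forall>j. 0<j \<longrightarrow> j<m \<longrightarrow> (ps!q, ps!j) \<in> L"
  proof (intro allI impI)
    fix j assume j: "0<j" "j<m"
    have "kk m q q \<le> kk m q j" by (simp add: kk_q)
    then show "(ps!q, ps!j) \<in> L" using inL[of q j] j qm q1 by linarith
  qed
  have o3: "\<forall>i j. 0<i \<longrightarrow> i<q \<longrightarrow> 0<j \<longrightarrow> j<q \<longrightarrow> (ps!j, ps!i) \<in> L \<longrightarrow> j \<le> i"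
  proof (intro allI impI)
    fix i j assume a: "0<i" "i<q" "0<j" "j<q" "(ps!j, ps!i) \<in> L"
    then have "kk m q j \<le> kk m q i" using inL[of j i] qm by simp
    then show "j \<le> i" using kk_lo[of j q m] kk_lo[of i q m] a by simp
  qed
  have len: "length ps = Suc m" using ear_len[OF e] .
  have rn: "rev ps ! k = ps ! (m - k)" if "k \<le> m" for k using that len by (simp add: rev_nth)
  have er: "ear_ctx V E V' (rev ps) m" using ear_rev[OF e] .
  have o2r: "\<forall>j. 0<j \<longrightarrow> j<m \<longrightarrow> (rev ps!(m-q), rev ps!j) \<in> L"
  proof (intro allI impI)
    fix j assume "0<j" "j<m"
    then show "(rev ps!(m-q), rev ps!j) \<in> L" using o2 rn qm by simp
  qed
  have o3r: "\<forall>i j. 0<i \<longrightarrow> i<m-q \<longrightarrow> 0<j \<longrightarrow> j<m-q \<longrightarrow> (rev ps!j, rev ps!i) \<in> L \<longrightarrow> j \<le> i"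
  proof (intro allI impI)
    fix i j assume a: "0<i" "i<m-q" "0<j" "j<m-q" "(rev ps!j, rev ps!i) \<in> L"
    then have "(ps!(m-j), ps!(m-i)) \<in> L" using rn by simp
    then have "kk m q (m-j) \<le> kk m q (m-i)" using inL[of "m-j" "m-i"] a by simp
    moreover have "kk m q (m-j) = 2*j+1" using kk_hi[of q "m-j" m] a by simp
    moreover have "kk m q (m-i) = 2*i+1" using kk_hi[of q "m-i" m] a by simp
    ultimately show "j \<le> i" by simp
  qed
  have finV': "finite V'" using g V'def unfolding graph_def by simp
  have bound: "real (card (WReach V E L x u)) \<le> f x" if x: "x \<le> r" and u: "u \<in> V" for x u
  proof (cases "u \<in> V'")
    case True
    have loc: "\<forall>ps. is_path V E ps \<longrightarrow> hd ps \<in> V' \<longrightarrow> last ps \<in> V' \<longrightarrow> path_len ps \<le> x \<longrightarrow> set ps \<subseteq> V'"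
    proof (intro allI impI)
      fix ps assume "is_path V E ps" "hd ps \<in> V'" "last ps \<in> V'" "path_len ps \<le> x"
      moreover have "path_len ps < m" using \<open>path_len ps \<le> x\<close> x rq qm by linarith
      ultimately show "set ps \<subseteq> V'" using ear_local[OF e] by blast
    qed
    have "WReach V E L x u \<subseteq> WReach V' E' L' x u"
      by (rule old_sub[OF _ E' o0 o1 loc True]) (use V'def in blast)
    moreover have "finite (WReach V' E' L' x u)" using finite_subset[OF WReach_sub_V finV'] .
    moreover have "real (card (WReach V' E' L' x u)) \<le> f x" using IH x True by blast
    ultimately show ?thesis by (rule card_le_WR)
  next
    case False
    then obtain i where i: "0<i" "i<m" "u = ps!i" using ear_notV'[OF e u] by blast
    show ?thesis
    proof (cases "i \<le> q")
      case True
      show ?thesis unfolding i(3)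
        by (rule ear_card[OF e E' o0 o1 o2 o3 anti refl' _ qm(2) rq x i(1) True finV' IH Fa Fc Fd]) simp
    next
      case False
      have u': "u = rev ps ! (m - i)" using rn i by simp
      show ?thesis unfolding u'
        by (rule ear_card[OF er E' o0 o1 o2r o3r anti refl' _ _ rq x _ _ finV' IH Fa Fc Fd])
          (use False i qm in auto)
    qed
  qed
  show ?thesis using lin bound unfolding good_linear_order_def by blast
qed

lemma small_step:
  assumes g: "graph V E" and v: "v \<in> V" and V'def: "V' = V - {v}" and E'def: "E' = {e\<in>E. e \<inter> {v} = {}}"
    and nb: "\<forall>y. {y,v} \<in> E \<longrightarrow> y = w" and hw: "(\<forall>y. {y,v} \<notin> E) \<or> w \<in> V'"
    and good: "good_linear_order V' E' L' f r"
    and Fa: "\<forall>x. x \<le> r \<longrightarrow> 1 \<le> f x"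
    and Fb: "\<forall>x. 1 \<le> x \<longrightarrow> x \<le> r \<longrightarrow> 1 + f (x - 1) \<le> f x"
  shows "\<exists>L. good_linear_order V E L f r"
proof -
  have lin': "linear_order_on V' L'" using good_parts(1)[OF good] .
  have IH: "\<forall>y v. y \<le> r \<longrightarrow> v \<in> V' \<longrightarrow> real (card (WReach V' E' L' y v)) \<le> f y"
    using good_parts(2)[OF good] .
  have L'sub: "L' \<subseteq> V' \<times> V'" and refl': "\<forall>y\<in>V'. (y,y) \<in> L'" using lin_parts[OF lin'] by auto
  define L where "L = L' \<union> V' \<times> {v} \<union> {(v,v)}"
  have dI: "V' \<inter> {v} = {}" using V'def by blast
  have lin: "linear_order_on V L"
  proof -
    have "linear_order_on (V' \<union> {v}) L" unfolding L_def
      by (rule lin_ext[OF lin' linear_order_on_singleton dI])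
    moreover have "V' \<union> {v} = V" using V'def v by blast
    ultimately show ?thesis by simp
  qed
  have o0: "\<forall>y z. y \<in> V' \<longrightarrow> z \<in> V' \<longrightarrow> ((y,z) \<in> L \<longleftrightarrow> (y,z) \<in> L')"
  proof (intro allI impI)
    fix y z assume "y \<in> V'" "z \<in> V'"
    then have "z \<noteq> v" using dI by blast
    then show "(y,z) \<in> L \<longleftrightarrow> (y,z) \<in> L'" unfolding L_def by blast
  qed
  have o1: "\<forall>y z. (y,z) \<in> L \<longrightarrow> z \<in> V' \<longrightarrow> y \<in> V'"
  proof (intro allI impI)
    fix y z assume yz: "(y,z) \<in> L" "z \<in> V'"
    then have "z \<noteq> v" using dI by blast
    then show "y \<in> V'" using L'sub yz unfolding L_def by blast
  qed
  have VV': "V - V' = {v}" using V'def v by blast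
  have E': "E' = {e\<in>E. e \<inter> (V - V') = {}}" using E'def VV' by simp
  have finV': "finite V'" using g V'def unfolding graph_def by simp
  have bound: "real (card (WReach V E L x u)) \<le> f x" if x: "x \<le> r" and u: "u \<in> V" for x u
  proof (cases "u \<in> V'")
    case True
    have loc: "\<forall>ps. is_path V E ps \<longrightarrow> hd ps \<in> V' \<longrightarrow> last ps \<in> V' \<longrightarrow> path_len ps \<le> x \<longrightarrow> set ps \<subseteq> V'"
    proof (intro allI impI)
      fix ps assume "is_path V E ps" "hd ps \<in> V'" "last ps \<in> V'"
      then show "set ps \<subseteq> V'" using small_deg_loc[OF _ V'def nb] by blast
    qed
    have "WReach V E L x u \<subseteq> WReach V' E' L' x u"
      by (rule old_sub[OF _ E' o0 o1 loc True]) (use V'def in blast)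
    moreover have "finite (WReach V' E' L' x u)" using finite_subset[OF WReach_sub_V finV'] .
    moreover have "real (card (WReach V' E' L' x u)) \<le> f x" using IH x True by blast
    ultimately show ?thesis by (rule card_le_WR)
  next
    case False
    then have uv: "u = v" using u V'def by blast
    have one: "real (card {v}) \<le> f x" using Fa x by simp
    show ?thesis
    proof (cases "x = 0")
      case True
      show ?thesis unfolding uv True by (rule card_le_WR[OF WReach_zero]) (use one True in auto)
    next
      case False
      show ?thesis
      proof (cases "\<forall>y. {y,v} \<notin> E")
        case True
        show ?thesis unfolding uv by (rule card_le_WR[OF isolated_sub[OF True]]) (use one in auto)
      next
        case nF: False
        then have w: "w \<in> V'" using hw by blast
        have sub: "WReach V E L x v \<subseteq> {v} \<union> WReach V' E' L' (x - 1) w"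
          by (rule pendant_sub[OF V'def v nb w E' o0 o1 refl'])
        have fw: "finite (WReach V' E' L' (x - 1) w)" using finite_subset[OF WReach_sub_V finV'] .
        have "card ({v} \<union> WReach V' E' L' (x - 1) w) \<le> 1 + card (WReach V' E' L' (x - 1) w)"
          using card_Un_le[of "{v}"] by simp
        moreover have "real (card (WReach V' E' L' (x - 1) w)) \<le> f (x - 1)" using IH x w by simp
        ultimately have "real (card ({v} \<union> WReach V' E' L' (x - 1) w)) \<le> 1 + f (x - 1)" by linarith
        also have "\<dots> \<le> f x" using Fb False x by simp
        finally have c: "real (card ({v} \<union> WReach V' E' L' (x - 1) w)) \<le> f x" .
        have "finite ({v} \<union> WReach V' E' L' (x - 1) w)" using fw by simp
        then show ?thesis unfolding uv by (rule card_le_WR[OF sub _ c])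
      qed
    qed
  qed
  show ?thesis using lin bound unfolding good_linear_order_def by blast
qed

lemma deg0: "graph V E \<Longrightarrow> degree E v = 0 \<Longrightarrow> \<forall>y. {y,v} \<notin> E"
  unfolding degree_def using nbr_finite by fastforce

lemma deg1: assumes g: "graph V E" and d: "degree E v = 1"
  obtains w where "\<forall>y. {y,v} \<in> E \<longrightarrow> y = w" "w \<in> V" "w \<noteq> v"
proof -
  obtain w where w: "{u. {u, v} \<in> E} = {w}" using d unfolding degree_def by (auto simp: card_Suc_eq)
  then have "{w, v} \<in> E" by blast
  then have "w \<in> V" "w \<noteq> v" using edge_in_V[OF g] no_loop[OF g] by auto
  moreover have "\<forall>y. {y,v} \<in> E \<longrightarrow> y = w" using w by blast
  ultimately show ?thesis using that by blast
qed

lemma main_ind: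
  assumes "path_degenerate P V E"
  shows "P = 2*q \<Longrightarrow> graph V E \<Longrightarrow> r < q
    \<Longrightarrow> \<forall>x. x \<le> r \<longrightarrow> 1 \<le> f x
    \<Longrightarrow> \<forall>x. 1 \<le> x \<longrightarrow> x \<le> r \<longrightarrow> 1 + f (x - 1) \<le> f x
    \<Longrightarrow> \<forall>x. 1 \<le> x \<longrightarrow> x \<le> r \<longrightarrow> real x + 2 \<le> f x
    \<Longrightarrow> \<forall>i x. 1 \<le> i \<longrightarrow> i \<le> x \<longrightarrow> x \<le> r \<longrightarrow>
              real i + f (x - i) + (if q \<le> x + i then 1 else 0) \<le> f x
    \<Longrightarrow> \<exists>L. good_linear_order V E L f r"
  using assms
proof (induction rule: path_degenerate.induct)
  case empty
  show ?case unfolding good_linear_order_def by (intro exI[of _ "{}"]) simp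
next
  case (step V E V' E')
  have g: "graph V E" by fact
  note F = step.prems(3-7)
  from step.hyps(1) show ?case unfolding p_reduction_def
  proof (elim disjE bexE exE conjE)
    fix v assume v: "v \<in> V" "degree E v = 0" "(V', E') = delete_vertices {v} V E"
    then have VE: "V' = V - {v}" "E' = {e\<in>E. e \<inter> {v} = {}}" unfolding delete_vertices_def by auto
    have "graph V' E'" unfolding VE by (rule graph_del[OF g])
    then obtain L' where "good_linear_order V' E' L' f r" using step.IH step.prems by blast
    moreover have "\<forall>y. {y,v} \<notin> E" using deg0[OF g v(2)] .
    ultimately show ?thesis using small_step[OF g v(1) VE, of v] F by blast
  next
    fix v assume v: "v \<in> V" "degree E v = 1" "(V', E') = delete_vertices {v} V E"
    then have VE: "V' = V - {v}" "E' = {e\<in>E. e \<inter> {v} = {}}" unfolding delete_vertices_def by auto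
    have "graph V' E'" unfolding VE by (rule graph_del[OF g])
    then obtain L' where L': "good_linear_order V' E' L' f r" using step.IH step.prems by blast
    obtain w where w: "\<forall>y. {y,v} \<in> E \<longrightarrow> y = w" "w \<in> V" "w \<noteq> v" using deg1[OF g v(2)] by blast
    have "w \<in> V'" using w VE by blast
    then show ?thesis using small_step[OF g v(1) VE w(1) _ L'] F by blast
  next
    fix ps assume ps: "strict_ear V E ps" "P \<le> path_len ps" "(V', E') = delete_vertices (internal ps) V E"
    then have VE: "V' = V - internal ps" "E' = {e\<in>E. e \<inter> internal ps = {}}" unfolding delete_vertices_def by auto
    have "graph V' E'" unfolding VE by (rule graph_del[OF g])
    then obtain L' where L': "good_linear_order V' E' L' f r" using step.IH step.prems by blast
    have "2*q \<le> path_len ps" using ps step.prems(1) by simp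
    then show ?thesis using ear_step_good[OF g ps(1) _ step.prems(3) VE L'] F by blast
  qed
qed

lemma H_nonneg:
  fixes q y :: nat assumes "1 \<le> y" "y < q"
  shows "0 \<le> log 2 ((real q - 1) / (real q - real y))"
proof -
  have "1 \<le> (real q - 1) / (real q - real y)" using assms by (simp add: field_simps)
  then show ?thesis by simp
qed

lemma H_mono:
  fixes q a b :: nat assumes "1 \<le> a" "a \<le> b" "b < q"
  shows "log 2 ((real q - 1) / (real q - real a)) \<le> log 2 ((real q - 1) / (real q - real b))"
proof -
  have p1: "0 < (real q - 1) / (real q - real a)" using assms by simp
  have "(real q - 1) / (real q - real a) \<le> (real q - 1) / (real q - real b)"
    using assms by (intro divide_left_mono) auto
  then show ?thesis using p1 by simp
qed

lemma H_double:
  fixes q y b :: nat assumes "1 \<le> y" "y \<le> b" "b < q" "q + y \<le> 2*b"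
  shows "1 + log 2 ((real q - 1) / (real q - real y)) \<le> log 2 ((real q - 1) / (real q - real b))"
proof -
  have q1: "0 < real q - 1" using assms by simp
  have p1: "0 < (real q - 1) / (real q - real y)" using assms by simp
  define A where "A = (real q - 1) / (real q - real y)"
  have Ap: "0 < A" using p1 unfolding A_def .
  have "log 2 (2 * A) = log 2 2 + log 2 A" using Ap by (simp add: log_mult)
  then have "1 + log 2 A = log 2 (2 * A)" by simp
  then have "1 + log 2 ((real q - 1) / (real q - real y)) = log 2 (2 * ((real q - 1) / (real q - real y)))"
    unfolding A_def .
  moreover have "2 * ((real q - 1) / (real q - real y)) \<le> (real q - 1) / (real q - real b)"
  proof -
    have h: "real (q + y) \<le> real (2*b)" using assms(4) by (simp only: of_nat_le_iff)
    then have "real q + real y \<le> 2 * real b" by simp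
    then have "2 * (real q - real b) \<le> real q - real y" by (smt (verit))
    then have "(real q - 1) * (2 * (real q - real b)) \<le> (real q - 1) * (real q - real y)"
      using q1 by (intro mult_left_mono) auto
    then show ?thesis using assms q1 by (simp add: field_simps)
  qed
  moreover have "0 < 2 * ((real q - 1) / (real q - real y))" by (rule mult_pos_pos) (use p1 in auto)
  ultimately show ?thesis using log_le_cancel_iff[of 2 "2 * ((real q - 1) / (real q - real y))" "(real q - 1) / (real q - real b)"]
    by (smt (verit))
qed

theorem mainTheorem18:
  fixes V :: "'a set" and E :: "'a set set" and r q :: nat and f :: "nat \<Rightarrow> real"
  assumes "graph V E"
    and "r \<ge> 1" and "q \<ge> 1" and "q \<ge> r + 1"
    and "path_degenerate (2 * q) V E"
    and "f = (\<lambda>x. if x = 0 then 1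
               else if q < 2 * r then real x + 2 + log 2 ((real q - 1) / (real q - real x))
               else real x + 2)"
  shows "\<exists>L. good_linear_order V E L f r"
proof -
  have rq: "r < q" using assms by simp
  define h where "h = (\<lambda>y::nat. if q < 2*r then log 2 ((real q - 1) / (real q - real y)) else 0)"
  have f0: "f 0 = 1" using assms(6) by simp
  have fx: "f x = real x + 2 + h x" if "1 \<le> x" for x using assms(6) that unfolding h_def by simp
  have hn: "0 \<le> h x" if "1 \<le> x" "x \<le> r" for x
    unfolding h_def using H_nonneg[of x q] that rq by simp
  have hm: "h a \<le> h b" if "1 \<le> a" "a \<le> b" "b \<le> r" for a b
    unfolding h_def using H_mono[of a b q] that rq by simp
  have Fa: "\<forall>x. x \<le> r \<longrightarrow> 1 \<le> f x"
  proof (intro allI impI)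
    fix x assume x: "x \<le> r"
    show "1 \<le> f x"
    proof (cases "x = 0")
      case True then show ?thesis using f0 by simp
    next
      case False then show ?thesis using fx[of x] hn[of x] x by simp
    qed
  qed
  have Fc: "\<forall>x. 1 \<le> x \<longrightarrow> x \<le> r \<longrightarrow> real x + 2 \<le> f x"
    using fx hn by fastforce
  have Fb: "\<forall>x. 1 \<le> x \<longrightarrow> x \<le> r \<longrightarrow> 1 + f (x - 1) \<le> f x"
  proof (intro allI impI)
    fix x assume x: "1 \<le> x" "x \<le> r"
    show "1 + f (x - 1) \<le> f x"
    proof (cases "x = 1")
      case True
      have "real 1 + 2 \<le> f 1" using Fc x True by blast
      then show ?thesis using f0 True by simp
    next
      case False
      then have x2: "1 \<le> x - 1" using x by simp
      have "f (x - 1) = real (x - 1) + 2 + h (x - 1)" using fx[OF x2] .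
      moreover have "real (x - 1) = real x - 1" using x by simp
      moreover have "h (x - 1) \<le> h x" using hm[OF x2] x by simp
      ultimately show ?thesis using fx[OF x(1)] by simp
    qed
  qed
  have Fd: "\<forall>i x. 1 \<le> i \<longrightarrow> i \<le> x \<longrightarrow> x \<le> r \<longrightarrow>
              real i + f (x - i) + (if q \<le> x + i then 1 else 0) \<le> f x"
  proof (intro allI impI)
    fix i x assume ix: "1 \<le> i" "i \<le> x" "x \<le> r"
    show "real i + f (x - i) + (if q \<le> x + i then 1 else 0) \<le> f x"
    proof (cases "i = x")
      case True
      have "real i + f (x - i) + (if q \<le> x + i then 1 else 0) \<le> real x + 2" using True f0 by simp
      also have "\<dots> \<le> f x" using Fc ix by simp
      finally show ?thesis .
    next
      case False
      then have y1: "1 \<le> x - i" using ix by simp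
      have fy: "f (x - i) = real (x - i) + 2 + h (x - i)" using fx[OF y1] .
      have ry: "real (x - i) = real x - real i" using ix by simp
      have "h (x - i) + (if q \<le> x + i then 1 else 0) \<le> h x"
      proof (cases "q \<le> x + i")
        case True
        then have qr: "q < 2*r" using False ix rq by linarith
        have "1 + log 2 ((real q - 1) / (real q - real (x - i))) \<le> log 2 ((real q - 1) / (real q - real x))"
          by (rule H_double) (use True ix rq y1 in auto)
        then show ?thesis unfolding h_def using qr True by simp
      next
        case False
        then show ?thesis using hm[OF y1, of x] ix by simp
      qed
      then show ?thesis using fy ry fx[of x] ix by simp
    qed
  qed
  show ?thesis
    by (rule main_ind[OF assms(5) refl assms(1) rq Fa Fb Fc Fd])
qed

end
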